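(* Let $G=(V,E)$ be an undirected graph with $n$ vertices, and let $\pi$ be a uniformly random ordering of $V$. Let $\ell>0$ and $d\le n$ be positive, and let $P$ be the $(\ell/d)$-prefix of $V$ with respect to $\pi$. Let $W$ be the lexicographically first maximal independent set of the induced subgraph $G[P]$ with respect to $\pi$. If $W$ and all of its neighbors $N_G(W)$ are removed from $G$, then with probability at least $1-n/e^{\ell}$ every remaining vertex has degree at most $d$ in the remaining graph $G[V\setminus (W\cup N_G(W))]$.
   Context: For a vertex set $U$, $N_G(U)$ is the set of all neighbors of vertices in $U$, and $G[U]$ is the subgraph induced by $U$. For an ordered vertex set $V$ and $0<\delta\le 1$, the $\delta$-prefix $P(V,\pi,\delta)$ is the set of the $\delta|V|$ earliest vertices of $V$ in the ordering $\pi$. The lexicographically first maximal independent set of a graph with respect to an ordering $\pi$ is the output of the sequential greedy algorithm: repeatedly take the first remaining vertex $v$ in the order $\pi$, add it to the set, and delete $v$ and all its neighbors, until no vertices remain. *)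

theory Defs
  imports Complex_Main "HOL-Combinatorics.Multiset_Permutations"
begin

text \<open>An ordering of V is a distinct list enumerating V (an element of
  permutations_of_set V); position in the list = rank in the ordering.\<close>

function greedy_mis :: "('a \<Rightarrow> 'a \<Rightarrow> bool) \<Rightarrow> 'a list \<Rightarrow> 'a set" where
  "greedy_mis E [] = {}"
| "greedy_mis E (v # vs) =
     insert v (greedy_mis E (filter (\<lambda>u. u \<noteq> v \<and> \<not> E v u) vs))"
  by pat_completeness auto
termination
  by (relation "measure (\<lambda>(E, xs). length xs)")
     (auto simp: le_imp_less_Suc length_filter_le)

definition prefix_set :: "'a list \<Rightarrow> real \<Rightarrow> 'a set" where
  "prefix_set \<sigma> \<delta> = set (take (nat \<lceil>\<delta> * real (length \<sigma>)\<rceil>) \<sigma>)"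

definition lfmis_prefix :: "('a \<Rightarrow> 'a \<Rightarrow> bool) \<Rightarrow> 'a list \<Rightarrow> real \<Rightarrow> 'a set" where
  "lfmis_prefix E \<sigma> \<delta> = greedy_mis E (take (nat \<lceil>\<delta> * real (length \<sigma>)\<rceil>) \<sigma>)"

definition nbhd :: "'a set \<Rightarrow> ('a \<Rightarrow> 'a \<Rightarrow> bool) \<Rightarrow> 'a set \<Rightarrow> 'a set" where
  "nbhd V E U = {u \<in> V. \<exists>w\<in>U. E w u}"

definition degree_in :: "('a \<Rightarrow> 'a \<Rightarrow> bool) \<Rightarrow> 'a set \<Rightarrow> 'a \<Rightarrow> nat" where
  "degree_in E R v = card {u \<in> R. E v u}"

end

theory Submission
  imports Defs
begin

fun Rm :: "('a \<Rightarrow> 'a \<Rightarrow> bool) \<Rightarrow> 'a set \<Rightarrow> 'a list \<Rightarrow> 'a set" where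
  "Rm E X [] = X"
| "Rm E X (x # xs) = (if x \<in> X then Rm E X xs else Rm E (X \<union> {x} \<union> {u. E x u}) xs)"

lemma Rm_mono: "X \<subseteq> Rm E X xs"
proof (induction xs arbitrary: X)
  case Nil
  then show ?case by simp
next
  case (Cons x xs)
  have "X \<subseteq> X \<union> {x} \<union> {u. E x u}" by blast
  then show ?case using Cons[of X] Cons[of "X \<union> {x} \<union> {u. E x u}"] by simp
qed

lemma Rm_greedy:
  "Rm E X xs = X \<union> greedy_mis E (filter (\<lambda>u. u \<notin> X) xs)
     \<union> {u. \<exists>w\<in>greedy_mis E (filter (\<lambda>u. u \<notin> X) xs). E w u}"
proof (induction xs arbitrary: X)
  case Nil
  then show ?case by simp
next
  case (Cons x xs)
  show ?case
  proof (cases "x \<in> X")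
    case True
    then show ?thesis using Cons by simp
  next
    case False
    have f: "filter (\<lambda>u. u \<noteq> x \<and> \<not> E x u) (filter (\<lambda>u. u \<notin> X) xs)
        = filter (\<lambda>u. u \<notin> X \<union> {x} \<union> {u. E x u}) xs"
      by (auto simp: filter_filter intro!: filter_cong)
    have h: "filter (\<lambda>u. u \<notin> X) (x#xs) = x # filter (\<lambda>u. u \<notin> X) xs" using False by simp
    have g: "greedy_mis E (filter (\<lambda>u. u \<notin> X) (x#xs))
       = insert x (greedy_mis E (filter (\<lambda>u. u \<notin> X \<union> {x} \<union> {u. E x u}) xs))"
      by (simp only: h greedy_mis.simps f)
    have "Rm E X (x#xs) = Rm E (X \<union> {x} \<union> {u. E x u}) xs" using False by simp
    also have "\<dots> = (X \<union> {x} \<union> {u. E x u}) \<union> greedy_mis E (filter (\<lambda>u. u \<notin> X \<union> {x} \<union> {u. E x u}) xs)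
       \<union> {u. \<exists>w\<in>greedy_mis E (filter (\<lambda>u. u \<notin> X \<union> {x} \<union> {u. E x u}) xs). E w u}"
      by (rule Cons)
    also have "\<dots> = X \<union> greedy_mis E (filter (\<lambda>u. u \<notin> X) (x#xs))
       \<union> {u. \<exists>w\<in>greedy_mis E (filter (\<lambda>u. u \<notin> X) (x#xs)). E w u}"
      unfolding g by auto
    finally show ?thesis .
  qed
qed


lemma core:
  fixes V :: "'a set" and E :: "'a \<Rightarrow> 'a \<Rightarrow> bool" and d :: real
  assumes fin: "finite V" and vV: "v \<in> V" and dpos: "d > 0" and dle: "d \<le> real (card V)"
    and sym: "\<And>u w. E u w \<Longrightarrow> E w u"
  shows "finite S \<Longrightarrow> V - X \<subseteq> S \<Longrightarrow> card S \<le> card V \<Longrightarrow>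
    real (card {\<sigma> \<in> permutations_of_set S. v \<notin> Rm E X (take k \<sigma>) \<and>
        d < real (card {u \<in> V - Rm E X (take k \<sigma>). E v u})})
    \<le> fact (card S) * (1 - d / real (card V)) ^ k"
proof (induction k arbitrary: S X)
  case 0
  have "card {\<sigma> \<in> permutations_of_set S. v \<notin> Rm E X (take 0 \<sigma>) \<and>
        d < real (card {u \<in> V - Rm E X (take 0 \<sigma>). E v u})} \<le> card (permutations_of_set S)"
    by (rule card_mono) auto
  then show ?case using 0 by simp (metis of_nat_fact of_nat_le_iff)
next
  case (Suc k)
  define n where "n = card V"
  have npos: "n > 0" using dpos dle n_def by linarith
  define q where "q = 1 - d / real n"
  have q0: "q \<ge> 0" using dle npos by (simp add: q_def n_def field_simps)
  define B where "B Y \<longleftrightarrow> v \<notin> Y \<and> d < real (card {u \<in> V - Y. E v u})" for Y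
  have Bmono: "B Y \<Longrightarrow> Y' \<subseteq> Y \<Longrightarrow> B Y'" for Y Y'
  proof -
    assume a: "B Y" "Y' \<subseteq> Y"
    have "card {u \<in> V - Y. E v u} \<le> card {u \<in> V - Y'. E v u}"
      by (rule card_mono) (use fin a(2) in auto)
    then show "B Y'" using a unfolding B_def by auto
  qed
  define A where "A = {\<sigma> \<in> permutations_of_set S. v \<notin> Rm E X (take (Suc k) \<sigma>) \<and>
        d < real (card {u \<in> V - Rm E X (take (Suc k) \<sigma>). E v u})}"
  have RHS0: "0 \<le> fact (card S) * q ^ Suc k" using q0 by simp
  show ?case
  proof (cases "S = {} \<or> \<not> B X")
    case True
    have "A = {}"
    proof (rule ccontr)
      assume "A \<noteq> {}"
      then obtain \<sigma> where s: "\<sigma> \<in> A" by auto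
      then have "B (Rm E X (take (Suc k) \<sigma>))" unfolding A_def B_def by auto
      then have bx: "B X" by (rule Bmono[OF _ Rm_mono])
      then have "v \<notin> X" unfolding B_def by auto
      then have "S \<noteq> {}" using Suc.prems(2) vV by auto
      then show False using True bx by auto
    qed
    then show ?thesis using RHS0 unfolding A_def[symmetric] q_def n_def by simp
  next
    case False
    then have Sne: "S \<noteq> {}" and BX: "B X" by auto
    define D where "D = {u \<in> V - X. E v u}"
    have DS: "D \<subseteq> S" using Suc.prems(2) D_def by auto
    have cardD: "d < real (card D)" using BX unfolding B_def D_def by auto
    define m where "m = card S"
    have mpos: "m > 0" using Sne Suc.prems(1) m_def by (simp add: card_gt_0_iff)
    define C where "C x = {\<sigma>' \<in> permutations_of_set (S - {x}).
        B (Rm E X (take (Suc k) (x # \<sigma>')))}" for x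
    define F where "F = fact (m - 1) * q ^ k"
    have AU: "A \<subseteq> (\<Union>x\<in>S. (\<lambda>xs. x # xs) ` C x)"
    proof
      fix \<sigma> assume "\<sigma> \<in> A"
      then have s: "\<sigma> \<in> permutations_of_set S" "B (Rm E X (take (Suc k) \<sigma>))"
        unfolding A_def B_def by auto
      have "\<sigma> \<in> (\<Union>x\<in>S. (\<lambda>xs. x # xs) ` permutations_of_set (S - {x}))"
        using s(1) permutations_of_set_nonempty[OF Sne] by simp
      then obtain x \<sigma>' where x: "x \<in> S" "\<sigma>' \<in> permutations_of_set (S - {x})" "\<sigma> = x # \<sigma>'"
        by blast
      have "\<sigma>' \<in> C x" unfolding C_def using x(2) s(2) x(3) by blast
      then show "\<sigma> \<in> (\<Union>x\<in>S. (\<lambda>xs. x # xs) ` C x)" using x(1) x(3) by blast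
    qed
    have "card A \<le> card (\<Union>x\<in>S. (\<lambda>xs. x # xs) ` C x)"
      by (rule card_mono[OF _ AU]) (simp add: C_def Suc.prems(1))
    also have "\<dots> \<le> (\<Sum>x\<in>S. card ((\<lambda>xs. x # xs) ` C x))"
      by (rule card_UN_le) (use Suc.prems(1) in simp)
    also have "\<dots> \<le> (\<Sum>x\<in>S. card (C x))"
      by (rule sum_mono) (rule card_image_le, simp add: C_def)
    finally have cA: "real (card A) \<le> (\<Sum>x\<in>S. real (card (C x)))"
      by (metis of_nat_le_iff of_nat_sum)
    have Cx: "real (card (C x)) \<le> (if x \<in> D then 0 else F)" if xS: "x \<in> S" for x
    proof (cases "x \<in> D")
      case True
      then have "x \<notin> X" "E x v" using D_def sym by auto
      then have vin: "v \<in> Rm E X (take (Suc k) (x # \<sigma>'))" for \<sigma>'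
      proof -
        have "v \<in> X \<union> {x} \<union> {u. E x u}" using \<open>E x v\<close> by simp
        then have "v \<in> Rm E (X \<union> {x} \<union> {u. E x u}) (take k \<sigma>')"
          using Rm_mono by (rule subsetD[rotated])
        then show ?thesis using \<open>x \<notin> X\<close> by simp
      qed
      have "C x = {}" unfolding C_def B_def using vin by blast
      then show ?thesis using True by simp
    next
      case xD: False
      define X'' where "X'' = (if x \<in> X then X else X \<union> {x} \<union> {u. E x u})"
      have Ceq: "C x = {\<sigma>' \<in> permutations_of_set (S - {x}). v \<notin> Rm E X'' (take k \<sigma>') \<and>
        d < real (card {u \<in> V - Rm E X'' (take k \<sigma>'). E v u})}"
      proof -
        have rm: "Rm E X (take (Suc k) (x # \<sigma>')) = Rm E X'' (take k \<sigma>')" for \<sigma>'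
          by (simp add: X''_def)
        show ?thesis unfolding C_def B_def rm by (rule refl)
      qed
      have p2: "V - X'' \<subseteq> S - {x}" using Suc.prems(2) X''_def by auto
      have p3: "card (S - {x}) \<le> card V" using Suc.prems(3) xS Suc.prems(1)
        by (simp add: card_Diff_singleton)
      have "real (card (C x)) \<le> fact (card (S - {x})) * (1 - d / real (card V)) ^ k"
        unfolding Ceq by (rule Suc.IH) (use Suc.prems(1) p2 p3 in auto)
      also have "\<dots> = F" unfolding F_def q_def n_def m_def
        using xS Suc.prems(1) by (simp add: card_Diff_singleton)
      finally show ?thesis using xD by simp
    qed
    have "(\<Sum>x\<in>S. real (card (C x))) \<le> (\<Sum>x\<in>S. (if x \<in> D then 0 else F))"
      by (rule sum_mono) (rule Cx)
    also have "\<dots> = (\<Sum>x\<in>S - D. F)"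
      by (rule sum.mono_neutral_cong_right) (use Suc.prems(1) in auto)
    also have "\<dots> = real (card (S - D)) * F" by (rule sum_constant)
    also have "\<dots> = (real m - real (card D)) * F"
    proof -
      have cD: "card D \<le> m" unfolding m_def by (rule card_mono[OF Suc.prems(1) DS])
      have "card (S - D) = m - card D" unfolding m_def
        by (rule card_Diff_subset[OF finite_subset[OF DS Suc.prems(1)] DS])
      then show ?thesis using cD by (simp add: of_nat_diff)
    qed
    also have "\<dots> \<le> (real m * q) * F"
    proof (rule mult_right_mono)
      have mn: "real m \<le> real n" using Suc.prems(3) m_def n_def by simp
      have "real m * d / real n \<le> real n * d / real n"
        by (intro divide_right_mono mult_right_mono) (use mn dpos in auto)
      also have "\<dots> = d" using npos by simp
      finally have md: "real m * d / real n \<le> d" .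
      have "real m * q = real m - real m * d / real n" unfolding q_def
        by (simp add: right_diff_distrib)
      then show "real m - real (card D) \<le> real m * q"
        using cardD md by linarith
      show "0 \<le> F" using q0 F_def by simp
    qed
    also have "\<dots> = fact m * q ^ Suc k"
    proof -
      have "fact m = real m * fact (m - 1)" using mpos
        by (rule fact_reduce)
      then show ?thesis unfolding F_def power_Suc by (simp only: mult_ac)
    qed
    finally have fin: "real (card A) \<le> fact m * q ^ Suc k" using cA by linarith
    show ?thesis using fin by (simp only: A_def m_def q_def n_def)
  qed
qed


lemma R_eq: "V - (greedy_mis E xs \<union> nbhd V E (greedy_mis E xs)) = V - Rm E {} xs"
  using Rm_greedy[of E "{}" xs] unfolding nbhd_def by auto

theorem lemma1:
  fixes V :: "'a set" and E :: "'a \<Rightarrow> 'a \<Rightarrow> bool" and l d :: real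
  assumes "finite V"
    and "\<And>u v. E u v \<Longrightarrow> u \<in> V \<and> v \<in> V"
    and "\<And>u v. E u v \<Longrightarrow> E v u"
    and "\<And>v. \<not> E v v"
    and "l > 0" and "d > 0" and "d \<le> real (card V)"
  shows "real (card {\<sigma> \<in> permutations_of_set V.
            let W = lfmis_prefix E \<sigma> (l / d);
                R = V - (W \<union> nbhd V E W)
            in \<forall>v\<in>R. real (degree_in E R v) \<le> d})
         / real (card (permutations_of_set V))
         \<ge> 1 - real (card V) / exp l"
proof -
  define n where "n = card V"
  define k where "k = nat \<lceil>l / d * real n\<rceil>"
  define q where "q = 1 - d / real n"
  have npos: "n > 0" using assms(6,7) n_def by linarith
  define G where "G = {\<sigma> \<in> permutations_of_set V.
            let W = lfmis_prefix E \<sigma> (l / d);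
                R = V - (W \<union> nbhd V E W)
            in \<forall>v\<in>R. real (degree_in E R v) \<le> d}"
  define bad where "bad v = {\<sigma> \<in> permutations_of_set V. v \<notin> Rm E {} (take k \<sigma>) \<and>
        d < real (card {u \<in> V - Rm E {} (take k \<sigma>). E v u})}" for v
  have q0: "0 \<le> q" using assms(7) npos by (simp add: q_def n_def field_simps)
  have "q \<le> exp (- (d / real n))" unfolding q_def using exp_ge_add_one_self[of "- (d / real n)"] by simp
  then have "q ^ k \<le> exp (- (d / real n)) ^ k" using q0 by (rule power_mono)
  also have "\<dots> = exp (real k * (- (d / real n)))" by (simp only: exp_of_nat_mult)
  also have "\<dots> \<le> exp (- l)"
  proof -
    have "l / d * real n \<le> real k" unfolding k_def by linarith
    then have "l \<le> real k * (d / real n)" using npos assms(6) by (simp add: field_simps)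
    then show ?thesis by simp
  qed
  finally have qk: "q ^ k \<le> exp (- l)" .
  have badb: "real (card (bad v)) \<le> fact n * exp (- l)" if "v \<in> V" for v
  proof -
    have "real (card (bad v)) \<le> fact (card V) * (1 - d / real (card V)) ^ k"
      unfolding bad_def by (rule core[OF assms(1) that assms(6,7) assms(3)]) (use assms(1) in auto)
    also have "\<dots> \<le> fact n * exp (- l)" using qk unfolding n_def[symmetric] q_def[symmetric]
      by (simp add: mult_left_mono)
    finally show ?thesis .
  qed
  have sub: "permutations_of_set V \<subseteq> G \<union> (\<Union>v\<in>V. bad v)"
  proof
    fix \<sigma> assume s: "\<sigma> \<in> permutations_of_set V"
    then have len: "length \<sigma> = n" using length_finite_permutations_of_set n_def by blast
    have lf: "lfmis_prefix E \<sigma> (l / d) = greedy_mis E (take k \<sigma>)"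
      unfolding lfmis_prefix_def k_def len ..
    show "\<sigma> \<in> G \<union> (\<Union>v\<in>V. bad v)"
    proof (cases "\<sigma> \<in> G")
      case False
      then have "\<not> (\<forall>v\<in>V - (lfmis_prefix E \<sigma> (l / d) \<union> nbhd V E (lfmis_prefix E \<sigma> (l / d))).
           real (degree_in E (V - (lfmis_prefix E \<sigma> (l / d) \<union> nbhd V E (lfmis_prefix E \<sigma> (l / d)))) v) \<le> d)"
        using s unfolding G_def Let_def by simp
      then obtain v where v: "v \<in> V - Rm E {} (take k \<sigma>)"
        "\<not> real (degree_in E (V - Rm E {} (take k \<sigma>)) v) \<le> d"
        unfolding lf R_eq by blast
      then have "\<sigma> \<in> bad v" using s unfolding bad_def degree_in_def by auto
      then show ?thesis using v by auto
    qed simp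
  qed
  have "card (permutations_of_set V) \<le> card (G \<union> (\<Union>v\<in>V. bad v))"
    by (rule card_mono[OF _ sub]) (simp add: G_def bad_def assms(1))
  also have "\<dots> \<le> card G + card (\<Union>v\<in>V. bad v)" by (rule card_Un_le)
  also have "\<dots> \<le> card G + (\<Sum>v\<in>V. card (bad v))"
    using card_UN_le[OF assms(1), of bad] by simp
  finally have "real (fact n) \<le> real (card G) + (\<Sum>v\<in>V. real (card (bad v)))"
    using assms(1) n_def by (metis of_nat_add of_nat_le_iff of_nat_sum card_permutations_of_set)
  also have "(\<Sum>v\<in>V. real (card (bad v))) \<le> (\<Sum>v\<in>V. fact n * exp (- l))"
    by (rule sum_mono) (rule badb)
  finally have "fact n - real n * (fact n * exp (- l)) \<le> real (card G)"
    using n_def by simp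
  moreover have "fact n > (0::real)" by simp
  ultimately have "1 - real n * exp (- l) \<le> real (card G) / fact n"
    by (simp add: field_simps)
  moreover have "real n * exp (- l) = real n / exp l" by (simp add: exp_minus field_simps)
  ultimately show ?thesis unfolding G_def[symmetric] n_def[symmetric]
    using assms(1) n_def by simp
qed

end
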